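(* In the D-RR setting under the nonconvex assumptions, let $\alpha_t=\alpha$ for all $t$ with $0<\alpha\le\min\big\{\frac{1}{2\sqrt6\,mL},\frac{1-\rho_w^2}{4\sqrt6\,L}\big\}$. Then for every epoch $t$ (and every realization of the permutations), with $\mathcal L_t:=\frac1n\sum_{\ell=0}^{m-1}\|\mathbf x_t^\ell-\mathbf 1(\bar x_t^\ell)^\intercal\|^2+\sum_{\ell=0}^{m-1}\|\bar x_t^\ell-\bar x_t^0\|^2$, $$\mathcal L_t\le\frac{4}{n(1-\rho_w^2)}\|\mathbf x_t^0-\mathbf 1(\bar x_t^0)^\intercal\|^2+\frac{6m^2\alpha^2B^2(m+4)}{(1-\rho_w^2)^2}+\frac{6\alpha^2m(4+m^2)}{(1-\rho_w^2)^2}\|\nabla f(\bar x_t^0)\|^2+\frac{12m^2\alpha^2A(4+m)}{1-\rho_w^2}\big(f(\bar x_t^0)-\bar f\big),$$ and $$\|\mathbf x_{t+1}^0-\mathbf 1(\bar x_{t+1}^0)^\intercal\|^2\le\Big(\frac{1+\rho_w^2}{2}\Big)^m\|\mathbf x_t^0-\mathbf 1(\bar x_t^0)^\intercal\|^2+\frac{12\alpha^2nL^2}{1-\rho_w^2}\mathcal L_t+\frac{6\alpha^2mnB^2}{1-\rho_w^2}+\frac{6\alpha^2mn}{1-\rho_w^2}\|\nabla f(\bar x_t^0)\|^2+\frac{12A\alpha^2mn}{1-\rho_w^2}\big(f(\bar x_t^0)-\bar f\big).$$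
   Context: D-RR setting. Let $n,m,p\ge1$ be integers and $[k]=\{1,\dots,k\}$. For $i\in[n]$, $\ell\in[m]$ let $f_{i,\ell}:\mathbb{R}^p\to\mathbb{R}$ be differentiable; $f_i:=\frac1m\sum_{\ell=1}^m f_{i,\ell}$, $f:=\frac1n\sum_{i=1}^n f_i$. Let $W=(w_{ij})\in\mathbb{R}^{n\times n}$ be nonnegative, symmetric, with $W\mathbf 1=\mathbf 1$, compliant with an undirected connected graph on $[n]$ (for $i\ne j$, $w_{ij}>0$ iff $\{i,j\}$ is an edge); $\rho_w$ is the spectral norm of $W-\frac1n\mathbf 1\mathbf 1^\intercal$ (so $\rho_w<1$). The D-RR algorithm: given initial points $x_{i,0}\in\mathbb{R}^p$ and stepsizes $\alpha_t>0$, at each epoch $t=0,1,\dots$ each agent $i$ draws a permutation $(\pi^i_0,\dots,\pi^i_{m-1})$ of $[m]$ uniformly at random, independently across agents and epochs; sets $x^0_{i,t}=x_{i,t}$; for $\ell=0,\dots,m-1$ sets $x^{\ell+1}_{i,t}=\sum_{j=1}^n w_{ij}\big(x^\ell_{j,t}-\alpha_t\nabla f_{j,\pi^j_\ell}(x^\ell_{j,t})\big)$; sets $x_{i,t+1}=x^m_{i,t}$. Notation: $\mathbf{x}_t^\ell\in\mathbb{R}^{n\times p}$ has $i$-th row $(x^\ell_{i,t})^\intercal$; $\bar x_t^\ell=\frac1n\sum_i x^\ell_{i,t}$; $\mathbf 1(\bar x_t^\ell)^\intercal$ is the $n\times p$ matrix all of whose rows equal $(\bar x_t^\ell)^\intercal$;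 $\|\cdot\|$ is Euclidean/Frobenius norm. Nonconvex assumptions: each $f_{i,\ell}$ has $L$-Lipschitz gradient and satisfies $f_{i,\ell}\ge\bar f_{i,\ell}$ for some constant $\bar f_{i,\ell}\in\mathbb{R}$; $\bar f:=\inf_x f(x)$; $A:=2L$; $B^2:=2L\big(\bar f-\frac{1}{mn}\sum_{i,\ell}\bar f_{i,\ell}\big)$. *)

theory Defs
  imports "HOL-Analysis.Analysis"
begin

text \<open>Agents are indexed by a finite type 'n (n = CARD('n)); local variables live in an
  arbitrary Euclidean space 'a (playing the role of R^p). Rows of the n x p matrices are
  functions 'n => 'a; the Frobenius norm squared is the sum of squared row norms.\<close>

definition avg :: "('n::finite \<Rightarrow> 'a::real_vector) \<Rightarrow> 'a" where
  "avg v = (1 / real CARD('n)) *\<^sub>R (\<Sum>i\<in>UNIV. v i)"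

text \<open>Squared Frobenius norm of X - 1 (avg X)^T.\<close>
definition cons_err :: "('n::finite \<Rightarrow> 'a::real_normed_vector) \<Rightarrow> real" where
  "cons_err v = (\<Sum>i\<in>UNIV. (norm (v i - avg v))\<^sup>2)"

definition rho_w :: "real^'n^'n \<Rightarrow> real" where
  "rho_w W = onorm (\<lambda>v::real^'n. (\<chi> i j. W $ i $ j - 1 / real CARD('n)) *v v)"

definition mixing_matrix :: "real^'n::finite^'n \<Rightarrow> bool" where
  "mixing_matrix W \<longleftrightarrow>
     (\<forall>i j. W $ i $ j \<ge> 0) \<and> (\<forall>i j. W $ i $ j = W $ j $ i) \<and>
     (\<forall>i. (\<Sum>j\<in>UNIV. W $ i $ j) = 1) \<and>
     (\<exists>E :: 'n \<Rightarrow> 'n \<Rightarrow> bool.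
        (\<forall>i j. E i j \<longleftrightarrow> E j i) \<and> (\<forall>i. \<not> E i i) \<and>
        (\<forall>i j. E\<^sup>*\<^sup>* i j) \<and>
        (\<forall>i j. i \<noteq> j \<longrightarrow> (W $ i $ j > 0 \<longleftrightarrow> E i j)))"

end

theory Submission
  imports Defs
begin

lemma descent:
  fixes f :: "'a::euclidean_space \<Rightarrow> real" and g :: "'a \<Rightarrow> 'a"
  assumes der: "\<And>z. (f has_derivative (\<lambda>h. g z \<bullet> h)) (at z)"
    and lip: "\<And>y z. norm (g y - g z) \<le> L * norm (y - z)"
  shows "f (z + d) \<le> f z + g z \<bullet> d + L / 2 * (norm d)\<^sup>2"
proof -
  define \<phi> where "\<phi> s = f (z + s *\<^sub>R d) - s * (g z \<bullet> d) - L / 2 * s\<^sup>2 * (norm d)\<^sup>2" for s :: real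
  have D: "(\<phi> has_real_derivative (g (z + s *\<^sub>R d) \<bullet> d - g z \<bullet> d - L * s * (norm d)\<^sup>2)) (at s)" for s
  proof -
    have 1: "((\<lambda>s. z + s *\<^sub>R d) has_derivative (\<lambda>h. h *\<^sub>R d)) (at s)"
      by (auto intro!: derivative_eq_intros)
    have 2: "((\<lambda>s. f (z + s *\<^sub>R d)) has_derivative (\<lambda>h. g (z + s *\<^sub>R d) \<bullet> (h *\<^sub>R d))) (at s)"
      using has_derivative_compose[OF 1 der] by simp
    have 3: "((\<lambda>s. f (z + s *\<^sub>R d)) has_real_derivative (g (z + s *\<^sub>R d) \<bullet> d)) (at s)"
      proof -
      have e: "(\<lambda>h. g (z + s *\<^sub>R d) \<bullet> (h *\<^sub>R d)) = (*) (g (z + s *\<^sub>R d) \<bullet> d)" by (rule ext) simp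
      show ?thesis using 2 unfolding e has_field_derivative_def .
    qed
    show ?thesis unfolding \<phi>_def
      by (rule 3 derivative_eq_intros refl | simp)+
  qed
  have "\<phi> 1 \<le> \<phi> 0"
  proof (rule DERIV_nonpos_imp_nonincreasing[of 0 1])
    fix s :: real assume s: "0 \<le> s" "s \<le> 1"
    have "g (z + s *\<^sub>R d) \<bullet> d - g z \<bullet> d = (g (z + s *\<^sub>R d) - g z) \<bullet> d" by (simp add: inner_diff_left)
    also have "\<dots> \<le> norm (g (z + s *\<^sub>R d) - g z) * norm d" by (rule norm_cauchy_schwarz)
    also have "\<dots> \<le> L * norm (s *\<^sub>R d) * norm d" using lip[of "z + s *\<^sub>R d" z] by (simp add: mult_right_mono)
    also have "\<dots> = L * s * (norm d)\<^sup>2" using s by (simp add: power2_eq_square)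
    finally show "\<exists>y. DERIV \<phi> s :> y \<and> y \<le> 0" using D[of s] by auto
  qed simp
  then show ?thesis unfolding \<phi>_def by simp
qed

lemma grad_bound:
  fixes f :: "'a::euclidean_space \<Rightarrow> real" and g :: "'a \<Rightarrow> 'a"
  assumes der: "\<And>z. (f has_derivative (\<lambda>h. g z \<bullet> h)) (at z)"
    and lip: "\<And>y z. norm (g y - g z) \<le> L * norm (y - z)"
    and low: "\<And>z. f z \<ge> fb" and L: "L > 0"
  shows "(norm (g z))\<^sup>2 \<le> 2 * L * (f z - fb)"
proof -
  have "f (z + (- (1/L) *\<^sub>R g z)) \<le> f z + g z \<bullet> (- (1/L) *\<^sub>R g z) + L / 2 * (norm (- (1/L) *\<^sub>R g z))\<^sup>2"
    by (rule descent[OF der lip])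
  also have "\<dots> = f z - (norm (g z))\<^sup>2 / (2 * L)"
    using L by (simp add: power2_norm_eq_inner field_simps) (simp add: power2_eq_square)
  finally have "fb \<le> f z - (norm (g z))\<^sup>2 / (2 * L)" using low order_trans by blast
  then show ?thesis using L by (simp add: field_simps)
qed

lemma sq_norm_basis: "(norm (v::'a::euclidean_space))\<^sup>2 = (\<Sum>b\<in>Basis. (v \<bullet> b)\<^sup>2)"
  unfolding power2_norm_eq_inner by (subst euclidean_inner) (simp add: power2_eq_square)

lemma sq_norm_vec: "(norm (v::real^'n))\<^sup>2 = (\<Sum>i\<in>UNIV. (v $ i)\<^sup>2)"
  unfolding power2_norm_eq_inner inner_vec_def by (simp add: power2_eq_square)

lemma frob_bound:
  fixes M :: "real^'n::finite^'n" and Z :: "'n \<Rightarrow> 'a::euclidean_space"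
  shows "(\<Sum>i\<in>UNIV. (norm (\<Sum>j\<in>UNIV. M $ i $ j *\<^sub>R Z j))\<^sup>2)
          \<le> (onorm (\<lambda>v. M *v v))\<^sup>2 * (\<Sum>i\<in>UNIV. (norm (Z i))\<^sup>2)"
proof -
  define \<rho> where "\<rho> = onorm (\<lambda>v. M *v v)"
  have bl: "bounded_linear (\<lambda>v. M *v v)"
    by (simp add: linear_linear matrix_vector_mul_linear)
  have r0: "0 \<le> \<rho>" unfolding \<rho>_def by (rule onorm_pos_le[OF bl])
  define vb where "vb b = (\<chi> j. Z j \<bullet> b)" for b
  have comp: "(\<Sum>j\<in>UNIV. M $ i $ j *\<^sub>R Z j) \<bullet> b = (M *v vb b) $ i" for i b
    by (simp add: vb_def matrix_vector_mult_def inner_sum_left)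
  have "(\<Sum>i\<in>UNIV. (norm (\<Sum>j\<in>UNIV. M $ i $ j *\<^sub>R Z j))\<^sup>2)
      = (\<Sum>b\<in>Basis. (norm (M *v vb b))\<^sup>2)"
    apply (subst sq_norm_vec)
    apply (subst sq_norm_basis)
    apply (simp add: comp)
    by (rule sum.swap)
  also have "\<dots> \<le> (\<Sum>b\<in>Basis. \<rho>\<^sup>2 * (norm (vb b))\<^sup>2)"
  proof (rule sum_mono)
    fix b :: 'a
    have "norm (M *v vb b) \<le> \<rho> * norm (vb b)" unfolding \<rho>_def by (rule onorm[OF bl])
    then have "(norm (M *v vb b))\<^sup>2 \<le> (\<rho> * norm (vb b))\<^sup>2"
      by (simp add: power_mono)
    then show "(norm (M *v vb b))\<^sup>2 \<le> \<rho>\<^sup>2 * (norm (vb b))\<^sup>2" by (simp add: power_mult_distrib)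
  qed
  also have "\<dots> = \<rho>\<^sup>2 * (\<Sum>i\<in>UNIV. (norm (Z i))\<^sup>2)"
    apply (subst sq_norm_vec)
    apply (subst sq_norm_basis)
    apply (simp add: sum_distrib_left[symmetric] vb_def)
    by (rule disjI2, rule sum.swap)
  finally show ?thesis unfolding \<rho>_def .
qed

lemma avg_mix:
  fixes W :: "real^'n::finite^'n" and Y :: "'n \<Rightarrow> 'a::real_vector"
  assumes W: "mixing_matrix W"
  shows "avg (\<lambda>i. \<Sum>j\<in>UNIV. W $ i $ j *\<^sub>R Y j) = avg Y"
proof -
  have cs: "(\<Sum>i\<in>UNIV. W $ i $ j) = 1" for j
    using W unfolding mixing_matrix_def by (metis (no_types, lifting) sum.cong)
  have "(\<Sum>i\<in>UNIV. \<Sum>j\<in>UNIV. W $ i $ j *\<^sub>R Y j) = (\<Sum>j\<in>UNIV. (\<Sum>i\<in>UNIV. W $ i $ j) *\<^sub>R Y j)"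
    by (subst sum.swap) (simp add: scaleR_sum_left)
  also have "\<dots> = (\<Sum>j\<in>UNIV. Y j)" by (simp add: cs)
  finally show ?thesis unfolding avg_def by simp
qed

lemma avg_lin: "avg (\<lambda>i. X i - a *\<^sub>R G i) = avg X - a *\<^sub>R avg G"
  by (simp add: avg_def sum_subtractf scaleR_sum_right[symmetric] algebra_simps)

lemma cons_mix:
  fixes W :: "real^'n::finite^'n" and Y :: "'n \<Rightarrow> 'a::euclidean_space"
  assumes W: "mixing_matrix W"
  shows "cons_err (\<lambda>i. \<Sum>j\<in>UNIV. W $ i $ j *\<^sub>R Y j) \<le> (rho_w W)\<^sup>2 * cons_err Y"
proof -
  define M :: "real^'n^'n" where "M = (\<chi> i j. W $ i $ j - 1 / real CARD('n))"
  have rs: "(\<Sum>j\<in>UNIV. W $ i $ j) = 1" for i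
    using W unfolding mixing_matrix_def by blast
  have a: "(\<Sum>j::'n\<in>UNIV. (1 / real CARD('n)) *\<^sub>R Y j) = avg Y" by (simp add: avg_def scaleR_sum_right)
  have c: "(\<Sum>j::'n\<in>UNIV. (1 / real CARD('n)) *\<^sub>R avg Y) = avg Y" by (simp add: scaleR_sum_left[symmetric])
  have key: "(\<Sum>j\<in>UNIV. W $ i $ j *\<^sub>R Y j) - avg Y = (\<Sum>j\<in>UNIV. M $ i $ j *\<^sub>R (Y j - avg Y))" for i
  proof -
    have e: "M $ i $ j *\<^sub>R (Y j - avg Y) = W $ i $ j *\<^sub>R Y j - (1 / real CARD('n)) *\<^sub>R Y j - W $ i $ j *\<^sub>R avg Y + (1 / real CARD('n)) *\<^sub>R avg Y" for j
      by (simp add: M_def algebra_simps)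
    have "(\<Sum>j\<in>UNIV. M $ i $ j *\<^sub>R (Y j - avg Y))
      = (\<Sum>j\<in>UNIV. W $ i $ j *\<^sub>R Y j) - (\<Sum>j::'n\<in>UNIV. (1 / real CARD('n)) *\<^sub>R Y j)
        - (\<Sum>j\<in>UNIV. W $ i $ j) *\<^sub>R avg Y + (\<Sum>j::'n\<in>UNIV. (1 / real CARD('n)) *\<^sub>R avg Y)"
      unfolding e by (simp only: sum.distrib sum_subtractf scaleR_sum_left)
    also have "\<dots> = (\<Sum>j\<in>UNIV. W $ i $ j *\<^sub>R Y j) - avg Y"
      unfolding a c rs by simp
    finally show ?thesis by simp
  qed
  have "cons_err (\<lambda>i. \<Sum>j\<in>UNIV. W $ i $ j *\<^sub>R Y j) = (\<Sum>i\<in>UNIV. (norm (\<Sum>j\<in>UNIV. M $ i $ j *\<^sub>R (Y j - avg Y)))\<^sup>2)"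
    unfolding cons_err_def avg_mix[OF W] key ..
  also have "\<dots> \<le> (onorm (\<lambda>v. M *v v))\<^sup>2 * (\<Sum>i\<in>UNIV. (norm (Y i - avg Y))\<^sup>2)"
    by (rule frob_bound)
  also have "\<dots> = (rho_w W)\<^sup>2 * cons_err Y"
    unfolding rho_w_def M_def cons_err_def ..
  finally show ?thesis .
qed

lemma norm_sum_sq:
  fixes v :: "'b \<Rightarrow> 'a::real_inner"
  assumes "finite K"
  shows "(norm (\<Sum>k\<in>K. v k))\<^sup>2 \<le> real (card K) * (\<Sum>k\<in>K. (norm (v k))\<^sup>2)"
proof -
  have pw: "v k \<bullet> v j \<le> ((norm (v k))\<^sup>2 + (norm (v j))\<^sup>2) / 2" for k j
  proof -
    have "0 \<le> (norm (v k - v j))\<^sup>2" by simp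
    then show ?thesis
      by (simp add: power2_norm_eq_inner inner_diff_left inner_diff_right inner_commute)
  qed
  have "(norm (\<Sum>k\<in>K. v k))\<^sup>2 = (\<Sum>k\<in>K. \<Sum>j\<in>K. v k \<bullet> v j)"
    by (simp add: power2_norm_eq_inner inner_sum_left inner_sum_right) (rule sum.swap)
  also have "\<dots> \<le> (\<Sum>k\<in>K. \<Sum>j\<in>K. ((norm (v k))\<^sup>2 + (norm (v j))\<^sup>2) / 2)"
    by (intro sum_mono pw)
  also have "\<dots> = real (card K) * (\<Sum>k\<in>K. (norm (v k))\<^sup>2)"
    by (simp add: sum.distrib add_divide_distrib sum_divide_distrib[symmetric] sum_distrib_left[symmetric] sum_distrib_right[symmetric])
  finally show ?thesis .
qed

lemma avg_sq:
  fixes Y :: "'n::finite \<Rightarrow> 'a::real_inner"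
  shows "(norm (avg Y))\<^sup>2 \<le> (1 / real CARD('n)) * (\<Sum>i\<in>UNIV. (norm (Y i))\<^sup>2)"
proof -
  have "(norm (avg Y))\<^sup>2 = (1 / real CARD('n))\<^sup>2 * (norm (\<Sum>i\<in>UNIV. Y i))\<^sup>2"
    by (simp add: avg_def power_mult_distrib power_divide)
  also have "\<dots> \<le> (1 / real CARD('n))\<^sup>2 * (real CARD('n) * (\<Sum>i\<in>UNIV. (norm (Y i))\<^sup>2))"
    by (intro mult_left_mono norm_sum_sq) auto
  also have "\<dots> = (1 / real CARD('n)) * (\<Sum>i\<in>UNIV. (norm (Y i))\<^sup>2)"
    by (simp add: power2_eq_square)
  finally show ?thesis .
qed

lemma cons_le:
  fixes Y :: "'n::finite \<Rightarrow> 'a::real_inner"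
  shows "cons_err Y \<le> (\<Sum>i\<in>UNIV. (norm (Y i))\<^sup>2)"
proof -
  define a where "a = avg Y"
  have s: "(\<Sum>i\<in>UNIV. Y i) = real CARD('n) *\<^sub>R a" by (simp add: a_def avg_def)
  have "cons_err Y = (\<Sum>i\<in>UNIV. (norm (Y i))\<^sup>2 - 2 * (Y i \<bullet> a) + (norm a)\<^sup>2)"
    unfolding cons_err_def a_def[symmetric]
    by (rule sum.cong) (simp_all add: power2_norm_eq_inner inner_diff_left inner_diff_right inner_commute)
  also have "\<dots> = (\<Sum>i\<in>UNIV. (norm (Y i))\<^sup>2) - 2 * ((\<Sum>i\<in>UNIV. Y i) \<bullet> a) + real CARD('n) * (norm a)\<^sup>2"
    by (simp add: sum.distrib sum_subtractf inner_sum_left sum_distrib_left)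
  also have "\<dots> = (\<Sum>i\<in>UNIV. (norm (Y i))\<^sup>2) - real CARD('n) * (norm a)\<^sup>2"
    by (simp add: s power2_norm_eq_inner)
  also have "\<dots> \<le> (\<Sum>i\<in>UNIV. (norm (Y i))\<^sup>2)" by simp
  finally show ?thesis .
qed

lemma young_q:
  fixes a b :: "'a::real_normed_vector"
  assumes q: "0 \<le> q" "q < 1"
  shows "q * (norm (a + b))\<^sup>2 \<le> (1 + q) / 2 * (norm a)\<^sup>2 + 2 / (1 - q) * (norm b)\<^sup>2"
proof -
  define s where "s = norm a"
  define u where "u = norm b"
  have s0: "0 \<le> s" "0 \<le> u" by (simp_all add: s_def u_def)
  have "q * (norm (a + b))\<^sup>2 \<le> q * (s + u)\<^sup>2"
    using q norm_triangle_ineq[of a b] by (intro mult_left_mono power_mono) (auto simp: s_def u_def)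
  also have "\<dots> \<le> (1 + q) / 2 * s\<^sup>2 + 2 / (1 - q) * u\<^sup>2"
  proof -
    have q1: "1 - q \<noteq> 0" using q by simp
    have "(1 + q) / 2 * s\<^sup>2 + 2 / (1 - q) * u\<^sup>2 - q * (s + u)\<^sup>2
        = (((1 - q) * s - 2 * q * u)\<^sup>2 + 2 * (1 - q) * (2 + q) * u\<^sup>2) / (2 * (1 - q))"
      using q1 by (simp add: field_simps power2_eq_square)
    also have "\<dots> \<ge> 0" using q by (intro divide_nonneg_nonneg add_nonneg_nonneg mult_nonneg_nonneg) auto
    finally show ?thesis by simp
  qed
  finally show ?thesis by (simp add: s_def u_def)
qed

lemma cons_step:
  fixes X G :: "'n::finite \<Rightarrow> 'a::real_inner"
  assumes q: "0 \<le> q" "q < 1"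
  shows "q * cons_err (\<lambda>i. X i - \<alpha> *\<^sub>R G i) \<le> (1 + q) / 2 * cons_err X + 2 * \<alpha>\<^sup>2 / (1 - q) * (\<Sum>i\<in>UNIV. (norm (G i))\<^sup>2)"
proof -
  have "q * cons_err (\<lambda>i. X i - \<alpha> *\<^sub>R G i)
      = (\<Sum>i\<in>UNIV. q * (norm ((X i - avg X) + (- \<alpha>) *\<^sub>R (G i - avg G)))\<^sup>2)"
    unfolding cons_err_def avg_lin sum_distrib_left
    by (rule sum.cong) (simp_all add: algebra_simps)
  also have "\<dots> \<le> (\<Sum>i\<in>UNIV. (1 + q) / 2 * (norm (X i - avg X))\<^sup>2 + 2 / (1 - q) * (norm ((- \<alpha>) *\<^sub>R (G i - avg G)))\<^sup>2)"
    by (intro sum_mono young_q q)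
  also have "\<dots> = (1 + q) / 2 * cons_err X + 2 * \<alpha>\<^sup>2 / (1 - q) * cons_err G"
    unfolding cons_err_def by (simp add: sum.distrib sum_distrib_left power_mult_distrib mult.assoc)
  also have "\<dots> \<le> (1 + q) / 2 * cons_err X + 2 * \<alpha>\<^sup>2 / (1 - q) * (\<Sum>i\<in>UNIV. (norm (G i))\<^sup>2)"
    using q by (intro add_left_mono mult_left_mono cons_le) auto
  finally show ?thesis .
qed

lemma lin_aux: "0 \<le> (X::real) \<Longrightarrow> 0 \<le> Y \<Longrightarrow> 0 \<le> Wt \<Longrightarrow> a + 6 * X + b + 6 * Y \<le> a + 12 * X + b + 6 * Wt + 12 * Y"
  by linarith

lemma tri3: "(norm ((a::'a::real_normed_vector) + b + c))\<^sup>2 \<le> 3 * ((norm a)\<^sup>2 + (norm b)\<^sup>2 + (norm c)\<^sup>2)"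
proof -
  have "norm (a + b + c) \<le> norm a + norm b + norm c"
    by (metis add_mono norm_triangle_ineq order_trans order_refl)
  then have "(norm (a + b + c))\<^sup>2 \<le> (norm a + norm b + norm c)\<^sup>2"
    by (intro power_mono) auto
  also have "\<dots> \<le> 3 * ((norm a)\<^sup>2 + (norm b)\<^sup>2 + (norm c)\<^sup>2)"
  proof -
    have "3 * ((norm a)\<^sup>2 + (norm b)\<^sup>2 + (norm c)\<^sup>2) - (norm a + norm b + norm c)\<^sup>2
       = (norm a - norm b)\<^sup>2 + (norm a - norm c)\<^sup>2 + (norm b - norm c)\<^sup>2"
      by (simp add: power2_eq_square algebra_simps)
    then show ?thesis by (smt (verit) zero_le_power2)
  qed
  finally show ?thesis .
qed

theorem lemma14:
  fixes W :: "real^'n::finite^'n"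
    and m :: nat and L \<alpha> :: real
    and fl :: "'n \<Rightarrow> nat \<Rightarrow> 'a::euclidean_space \<Rightarrow> real"
    and g :: "'n \<Rightarrow> nat \<Rightarrow> 'a \<Rightarrow> 'a"
    and fb :: "'n \<Rightarrow> nat \<Rightarrow> real"
    and \<pi> :: "'n \<Rightarrow> nat \<Rightarrow> nat \<Rightarrow> nat"
    and x :: "nat \<Rightarrow> nat \<Rightarrow> 'n \<Rightarrow> 'a"
    and t :: nat
  assumes m_pos: "m \<ge> 1"
    and W: "mixing_matrix W"
    and L_pos: "L > 0"
    and grad: "\<And>i l z. l < m \<Longrightarrow> (fl i l has_derivative (\<lambda>h. g i l z \<bullet> h)) (at z)"
    and lip: "\<And>i l y z. l < m \<Longrightarrow> norm (g i l y - g i l z) \<le> L * norm (y - z)"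
    and lower: "\<And>i l z. l < m \<Longrightarrow> fl i l z \<ge> fb i l"
    and perm: "\<And>i s. \<pi> i s permutes {..<m}"
    and step: "\<And>s l i. l < m \<Longrightarrow>
       x s (Suc l) i = (\<Sum>j\<in>UNIV. W $ i $ j *\<^sub>R (x s l j - \<alpha> *\<^sub>R g j (\<pi> j s l) (x s l j)))"
    and epoch: "\<And>s. x (Suc s) 0 = x s m"
    and \<alpha>_pos: "0 < \<alpha>"
    and \<alpha>_le: "\<alpha> \<le> min (1 / (2 * sqrt 6 * real m * L)) ((1 - (rho_w W)\<^sup>2) / (4 * sqrt 6 * L))"
  shows
    "let n = real CARD('n); \<rho> = rho_w W;
         F = (\<lambda>z. (1 / n) * (\<Sum>i\<in>UNIV. (1 / real m) * (\<Sum>l<m. fl i l z)));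
         gF = (\<lambda>z. (1 / n) *\<^sub>R (\<Sum>i\<in>UNIV. (1 / real m) *\<^sub>R (\<Sum>l<m. g i l z)));
         fbar = (INF z. F z);
         A = 2 * L;
         B2 = 2 * L * (fbar - (1 / (real m * n)) * (\<Sum>i\<in>UNIV. \<Sum>l<m. fb i l));
         xb = (\<lambda>l. avg (x t l));
         \<L> = (1 / n) * (\<Sum>l<m. cons_err (x t l)) + (\<Sum>l<m. (norm (xb l - xb 0))\<^sup>2)
     in \<L> \<le> 4 / (n * (1 - \<rho>\<^sup>2)) * cons_err (x t 0)
              + 6 * (real m)\<^sup>2 * \<alpha>\<^sup>2 * B2 * (real m + 4) / (1 - \<rho>\<^sup>2)\<^sup>2
              + 6 * \<alpha>\<^sup>2 * real m * (4 + (real m)\<^sup>2) / (1 - \<rho>\<^sup>2)\<^sup>2 * (norm (gF (xb 0)))\<^sup>2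
              + 12 * (real m)\<^sup>2 * \<alpha>\<^sup>2 * A * (4 + real m) / (1 - \<rho>\<^sup>2) * (F (xb 0) - fbar)
      \<and> cons_err (x (Suc t) 0) \<le> ((1 + \<rho>\<^sup>2) / 2) ^ m * cons_err (x t 0)
              + 12 * \<alpha>\<^sup>2 * n * L\<^sup>2 / (1 - \<rho>\<^sup>2) * \<L>
              + 6 * \<alpha>\<^sup>2 * real m * n * B2 / (1 - \<rho>\<^sup>2)
              + 6 * \<alpha>\<^sup>2 * real m * n / (1 - \<rho>\<^sup>2) * (norm (gF (xb 0)))\<^sup>2
              + 12 * A * \<alpha>\<^sup>2 * real m * n / (1 - \<rho>\<^sup>2) * (F (xb 0) - fbar)"
proof -
  define nn where "nn = real CARD('n)"
  define \<rho> where "\<rho> = rho_w W"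
  define q where "q = \<rho>\<^sup>2"
  define r where "r = (1 + q) / 2"
  define C where "C = 2 * \<alpha>\<^sup>2 / (1 - q)"
  define F where "F = (\<lambda>z. (1 / nn) * (\<Sum>i\<in>UNIV. (1 / real m) * (\<Sum>l<m. fl i l z)))"
  define gF where "gF = (\<lambda>z. (1 / nn) *\<^sub>R (\<Sum>i\<in>UNIV. (1 / real m) *\<^sub>R (\<Sum>l<m. g i l z)))"
  define fbar where "fbar = (INF z. F z)"
  define A where "A = 2 * L"
  define B2 where "B2 = 2 * L * (fbar - (1 / (real m * nn)) * (\<Sum>i\<in>UNIV. \<Sum>l<m. fb i l))"
  define xb where "xb = (\<lambda>l. avg (x t l))"
  define Lam where "Lam = (1 / nn) * (\<Sum>l<m. cons_err (x t l)) + (\<Sum>l<m. (norm (xb l - xb 0))\<^sup>2)"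
  define z where "z = xb 0"
  define G where "G = (\<lambda>l i. g i (\<pi> i t l) (x t l i))"
  define e where "e = (\<lambda>l. cons_err (x t l))"
  define d where "d = (\<lambda>l. (norm (xb l - z))\<^sup>2)"
  define S where "S = (\<lambda>l. \<Sum>i\<in>UNIV. (norm (G l i))\<^sup>2)"
  define P where "P = e 0"
  define H where "H = (\<Sum>i\<in>UNIV. \<Sum>l<m. (norm (g i l z))\<^sup>2)"
  define K where "K = B2 + A * (F z - fbar)"
  define Sg where "Sg = (\<Sum>l<m. S l)"
  define E where "E = (\<Sum>l<m. e l)"
  define D where "D = (\<Sum>l<m. d l)"
  have nn0: "nn > 0" unfolding nn_def by simp
  have m0: "real m > 0" using m_pos by simp
  have bl: "bounded_linear (\<lambda>v::real^'n. (\<chi> i j. W $ i $ j - 1 / real CARD('n)) *v v)"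
    by (simp add: linear_linear matrix_vector_mul_linear)
  have rho0: "0 \<le> \<rho>" unfolding \<rho>_def rho_w_def by (rule onorm_pos_le[OF bl])
  have q0: "0 \<le> q" unfolding q_def by simp
  have s6: "sqrt 6 * sqrt 6 = (6::real)" by simp
  have s6p: "sqrt 6 > (0::real)" by simp
  have a2: "\<alpha> \<le> (1 - q) / (4 * sqrt 6 * L)" using \<alpha>_le unfolding q_def \<rho>_def by simp
  have a1: "\<alpha> \<le> 1 / (2 * sqrt 6 * real m * L)" using \<alpha>_le by simp
  have q1: "q < 1"
  proof -
    have "0 < (1 - q) / (4 * sqrt 6 * L)" using a2 \<alpha>_pos by linarith
    moreover have "0 < L * sqrt 6" using L_pos s6p by simp
    ultimately show ?thesis using L_pos by (auto simp add: zero_less_divide_iff)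
  qed
  have r0: "0 \<le> r" "r \<le> 1" "r < 1" using q0 q1 unfolding r_def by auto
  have C0: "0 \<le> C" using q1 unfolding C_def by simp
  have S0: "0 \<le> S l" for l unfolding S_def by (simp add: sum_nonneg)
  have e0: "0 \<le> e l" for l unfolding e_def cons_err_def by (simp add: sum_nonneg)
  have d0: "0 \<le> d l" for l unfolding d_def by simp
  have al1: "\<alpha>\<^sup>2 \<le> (1 - q) / (48 * real m * L\<^sup>2)"
  proof -
    have "\<alpha>\<^sup>2 = \<alpha> * \<alpha>" by (simp add: power2_eq_square)
    also have "\<dots> \<le> (1 / (2 * sqrt 6 * real m * L)) * ((1 - q) / (4 * sqrt 6 * L))"
      using a1 a2 \<alpha>_pos L_pos by (intro mult_mono) auto
    also have "\<dots> = (1 - q) / (48 * real m * L\<^sup>2)"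
      using s6 by (simp add: field_simps power2_eq_square)
    finally show ?thesis .
  qed
  have al2: "\<alpha>\<^sup>2 \<le> 1 / (24 * (real m)\<^sup>2 * L\<^sup>2)"
  proof -
    have "\<alpha>\<^sup>2 \<le> (1 / (2 * sqrt 6 * real m * L))\<^sup>2"
      using a1 \<alpha>_pos by (intro power_mono) auto
    also have "\<dots> = 1 / (24 * (real m)\<^sup>2 * L\<^sup>2)"
      using s6 by (simp add: field_simps power2_eq_square)
    finally show ?thesis .
  qed
  have Xs: "x t (Suc l) = (\<lambda>i. \<Sum>j\<in>UNIV. W $ i $ j *\<^sub>R (x t l j - \<alpha> *\<^sub>R G l j))" if "l < m" for l
    using step[OF that] unfolding G_def by (intro ext) simp
  have e_step: "e (Suc l) \<le> r * e l + C * S l" if "l < m" for l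
  proof -
    have "e (Suc l) \<le> q * cons_err (\<lambda>j. x t l j - \<alpha> *\<^sub>R G l j)"
      unfolding e_def Xs[OF that] q_def \<rho>_def by (rule cons_mix[OF W])
    also have "\<dots> \<le> r * e l + C * S l"
      unfolding r_def C_def e_def S_def using cons_step[OF q0 q1] by simp
    finally show ?thesis .
  qed
  have e_unroll: "l \<le> m \<Longrightarrow> e l \<le> r ^ l * P + C * (\<Sum>k<l. S k)" for l
  proof (induction l)
    case 0 then show ?case by (simp add: P_def)
  next
    case (Suc l)
    then have lm: "l < m" by simp
    have "e (Suc l) \<le> r * e l + C * S l" by (rule e_step[OF lm])
    also have "\<dots> \<le> r * (r ^ l * P + C * (\<Sum>k<l. S k)) + C * S l"
      using Suc lm r0 by (intro add_right_mono mult_left_mono) auto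
    also have "\<dots> \<le> r ^ Suc l * P + C * (\<Sum>k<l. S k) + C * S l"
    proof -
      have "r * (C * (\<Sum>k<l. S k)) \<le> 1 * (C * (\<Sum>k<l. S k))"
        using r0 C0 S0 by (intro mult_right_mono mult_nonneg_nonneg sum_nonneg) auto
      then show ?thesis by (simp add: algebra_simps)
    qed
    also have "\<dots> = r ^ Suc l * P + C * (\<Sum>k<Suc l. S k)" by (simp add: algebra_simps)
    finally show ?case .
  qed
  have xb_step: "xb (Suc l) = xb l - \<alpha> *\<^sub>R avg (G l)" if "l < m" for l
    unfolding xb_def Xs[OF that] avg_mix[OF W] avg_lin ..
  have xb_unroll: "l \<le> m \<Longrightarrow> xb l - z = - (\<alpha> *\<^sub>R (\<Sum>k<l. avg (G k)))" for l
  proof (induction l)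
    case 0 then show ?case by (simp add: z_def)
  next
    case (Suc l)
    then show ?case using xb_step[of l] by (simp add: algebra_simps scaleR_sum_right) (metis add.assoc)
  qed
  have d_bound: "d l \<le> \<alpha>\<^sup>2 * real l * ((1 / nn) * (\<Sum>k<l. S k))" if "l \<le> m" for l
  proof -
    have "d l = \<alpha>\<^sup>2 * (norm (\<Sum>k<l. avg (G k)))\<^sup>2"
      unfolding d_def xb_unroll[OF that] by (simp add: power_mult_distrib)
    also have "\<dots> \<le> \<alpha>\<^sup>2 * (real l * (\<Sum>k<l. (norm (avg (G k)))\<^sup>2))"
      using norm_sum_sq[of "{..<l}" "\<lambda>k. avg (G k)"] by (intro mult_left_mono) auto
    also have "\<dots> \<le> \<alpha>\<^sup>2 * (real l * (\<Sum>k<l. (1 / nn) * S k))"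
      unfolding S_def nn_def by (intro mult_left_mono sum_mono avg_sq) auto
    finally show ?thesis by (simp add: sum_divide_distrib[symmetric])
  qed
  have lipsq: "(norm (g i j y - g i j w))\<^sup>2 \<le> L\<^sup>2 * (norm (y - w))\<^sup>2" if "j < m" for i j y w
  proof -
    have "norm (g i j y - g i j w) \<le> L * norm (y - w)" by (rule lip[OF that])
    then have "(norm (g i j y - g i j w))\<^sup>2 \<le> (L * norm (y - w))\<^sup>2" by (intro power_mono) auto
    then show ?thesis by (simp add: power_mult_distrib)
  qed
  have S_bound: "S l \<le> 3 * L\<^sup>2 * e l + 3 * L\<^sup>2 * nn * d l + 3 * (\<Sum>i\<in>UNIV. (norm (g i (\<pi> i t l) z))\<^sup>2)"
    if "l < m" for l
  proof -
    have pi: "\<pi> i t l < m" for i using permutes_in_image[OF perm[of i t]] that by simp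
    have "(norm (G l i))\<^sup>2 \<le> 3 * (L\<^sup>2 * (norm (x t l i - xb l))\<^sup>2 + L\<^sup>2 * d l + (norm (g i (\<pi> i t l) z))\<^sup>2)" for i
    proof -
      define j where "j = \<pi> i t l"
      have "G l i = (g i j (x t l i) - g i j (xb l)) + (g i j (xb l) - g i j z) + g i j z"
        unfolding G_def j_def by simp
      then have "(norm (G l i))\<^sup>2 \<le> 3 * ((norm (g i j (x t l i) - g i j (xb l)))\<^sup>2 + (norm (g i j (xb l) - g i j z))\<^sup>2 + (norm (g i j z))\<^sup>2)"
        using tri3 by metis
      also have "\<dots> \<le> 3 * (L\<^sup>2 * (norm (x t l i - xb l))\<^sup>2 + L\<^sup>2 * d l + (norm (g i j z))\<^sup>2)"
        unfolding d_def using lipsq pi unfolding j_def by (intro mult_left_mono add_mono) auto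
      finally show ?thesis unfolding j_def .
    qed
    then have "S l \<le> (\<Sum>i\<in>UNIV. 3 * (L\<^sup>2 * (norm (x t l i - xb l))\<^sup>2 + L\<^sup>2 * d l + (norm (g i (\<pi> i t l) z))\<^sup>2))"
      unfolding S_def by (intro sum_mono)
    also have "\<dots> = 3 * L\<^sup>2 * e l + 3 * L\<^sup>2 * nn * d l + 3 * (\<Sum>i\<in>UNIV. (norm (g i (\<pi> i t l) z))\<^sup>2)"
      unfolding e_def cons_err_def xb_def nn_def
      by (simp add: sum.distrib sum_distrib_left algebra_simps)
    finally show ?thesis .
  qed
  have Hperm: "(\<Sum>l<m. \<Sum>i\<in>UNIV. (norm (g i (\<pi> i t l) z))\<^sup>2) = H"
  proof -
    have "(\<Sum>l<m. \<Sum>i\<in>UNIV. (norm (g i (\<pi> i t l) z))\<^sup>2) = (\<Sum>i\<in>UNIV. \<Sum>l<m. (norm (g i (\<pi> i t l) z))\<^sup>2)"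
      by (rule sum.swap)
    also have "\<dots> = H" unfolding H_def
    proof (rule sum.cong[OF refl])
      fix i
      show "(\<Sum>l<m. (norm (g i (\<pi> i t l) z))\<^sup>2) = (\<Sum>l<m. (norm (g i l z))\<^sup>2)"
        using sum.permute[OF perm[of i t], of "\<lambda>l. (norm (g i l z))\<^sup>2"] by (simp add: comp_def)
    qed
    finally show ?thesis .
  qed
  define c0 where "c0 = (1 / (real m * nn)) * (\<Sum>i\<in>UNIV. \<Sum>l<m. fb i l)"
  have Fform: "F w = (1 / (real m * nn)) * (\<Sum>i\<in>UNIV. \<Sum>l<m. fl i l w)" for w
    unfolding F_def by (simp add: sum_divide_distrib[symmetric])
  have Fge: "c0 \<le> F w" for w
  proof -
    have "(\<Sum>i\<in>UNIV. \<Sum>l<m. fb i l) \<le> (\<Sum>i\<in>UNIV. \<Sum>l<m. fl i l w)"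
      using lower by (intro sum_mono) auto
    then show ?thesis unfolding Fform c0_def using nn0 m0 by (intro mult_left_mono) auto
  qed
  have bdd: "bdd_below (range F)" using Fge by (intro bdd_belowI) auto
  have fbar_le: "fbar \<le> F w" for w unfolding fbar_def by (rule cINF_lower[OF bdd UNIV_I])
  have fbar_ge: "c0 \<le> fbar" unfolding fbar_def by (rule cINF_greatest) (auto simp: Fge)
  have B20: "0 \<le> B2" unfolding B2_def c0_def[symmetric] using fbar_ge L_pos by simp
  have Fz0: "0 \<le> F z - fbar" using fbar_le[of z] by simp
  have A0: "0 \<le> A" unfolding A_def using L_pos by simp
  have K0: "0 \<le> K" unfolding K_def using B20 Fz0 A0 by simp
  have HK: "H \<le> nn * real m * K"
  proof -
    have "H \<le> (\<Sum>i\<in>UNIV. \<Sum>l<m. 2 * L * (fl i l z - fb i l))"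
      unfolding H_def
    proof (intro sum_mono)
      fix i l assume "l \<in> {..<m}"
      then have lm: "l < m" by simp
      show "(norm (g i l z))\<^sup>2 \<le> 2 * L * (fl i l z - fb i l)"
        by (rule grad_bound[OF grad[OF lm] lip[OF lm] lower[OF lm] L_pos])
    qed
    also have "\<dots> = 2 * L * ((\<Sum>i\<in>UNIV. \<Sum>l<m. fl i l z) - (\<Sum>i\<in>UNIV. \<Sum>l<m. fb i l))"
      by (simp add: sum_distrib_left sum_subtractf algebra_simps)
    also have "\<dots> = 2 * L * (real m * nn * F z - real m * nn * c0)"
      unfolding Fform c0_def using nn0 m0 by simp
    also have "\<dots> = nn * real m * K"
      unfolding K_def A_def B2_def c0_def[symmetric] by (simp add: algebra_simps)
    finally show ?thesis .
  qed
  have part: "(\<Sum>k<l. S k) \<le> Sg" if "l \<le> m" for l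
    unfolding Sg_def using that S0 by (intro sum_mono2) auto
  have Sg0: "0 \<le> Sg" unfolding Sg_def using S0 by (simp add: sum_nonneg)
  have P0: "0 \<le> P" unfolding P_def by (rule e0)
  have H0: "0 \<le> H" unfolding H_def by (simp add: sum_nonneg)
  have geo: "(\<Sum>l<m. r ^ l) \<le> 2 / (1 - q)"
  proof -
    have "(\<Sum>l<m. r ^ l) = (1 - r ^ m) / (1 - r)" using r0 by (simp add: sum_gp_strict)
    also have "\<dots> \<le> 1 / (1 - r)" using r0 by (intro divide_right_mono) auto
    also have "\<dots> = 2 / (1 - q)" unfolding r_def using q1 by (simp add: field_simps)
    finally show ?thesis .
  qed
  have E_bound: "E \<le> 2 / (1 - q) * P + real m * C * Sg"
  proof -
    have "E \<le> (\<Sum>l<m. r ^ l * P + C * Sg)"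
      unfolding E_def
    proof (intro sum_mono)
      fix l assume "l \<in> {..<m}"
      then have lm: "l \<le> m" by simp
      have "e l \<le> r ^ l * P + C * (\<Sum>k<l. S k)" by (rule e_unroll[OF lm])
      also have "\<dots> \<le> r ^ l * P + C * Sg" using part[OF lm] C0 by (intro add_left_mono mult_left_mono) auto
      finally show "e l \<le> r ^ l * P + C * Sg" .
    qed
    also have "\<dots> = (\<Sum>l<m. r ^ l) * P + real m * C * Sg" by (simp add: sum.distrib sum_distrib_right)
    also have "\<dots> \<le> 2 / (1 - q) * P + real m * C * Sg" using geo P0 by (intro add_right_mono mult_right_mono) auto
    finally show ?thesis .
  qed
  have D_bound: "D \<le> \<alpha>\<^sup>2 * (real m)\<^sup>2 / nn * Sg"
  proof -
    have "D \<le> (\<Sum>l<m. \<alpha>\<^sup>2 * real m * ((1 / nn) * Sg))"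
      unfolding D_def
    proof (intro sum_mono)
      fix l assume "l \<in> {..<m}"
      then have lm: "l \<le> m" by simp
      have "d l \<le> \<alpha>\<^sup>2 * real l * ((1 / nn) * (\<Sum>k<l. S k))" by (rule d_bound[OF lm])
      also have "\<dots> \<le> \<alpha>\<^sup>2 * real m * ((1 / nn) * Sg)"
        using part[OF lm] lm nn0 Sg0 S0
        by (intro mult_mono mult_left_mono sum_nonneg mult_nonneg_nonneg) (auto simp: sum_nonneg)
      finally show "d l \<le> \<alpha>\<^sup>2 * real m * ((1 / nn) * Sg)" .
    qed
    also have "\<dots> = \<alpha>\<^sup>2 * (real m)\<^sup>2 / nn * Sg" by (simp add: power2_eq_square)
    finally show ?thesis .
  qed
  have Sg_bound: "Sg \<le> 3 * L\<^sup>2 * E + 3 * L\<^sup>2 * nn * D + 3 * H"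
  proof -
    have "Sg \<le> (\<Sum>l<m. 3 * L\<^sup>2 * e l + 3 * L\<^sup>2 * nn * d l + 3 * (\<Sum>i\<in>UNIV. (norm (g i (\<pi> i t l) z))\<^sup>2))"
      unfolding Sg_def using S_bound by (intro sum_mono) auto
    also have "\<dots> = 3 * L\<^sup>2 * E + 3 * L\<^sup>2 * nn * D + 3 * H"
      unfolding E_def D_def Hperm[symmetric] by (simp add: sum.distrib sum_distrib_left)
    finally show ?thesis .
  qed
  have Lam_eq: "Lam = (1 / nn) * E + D"
    unfolding Lam_def E_def D_def e_def d_def z_def ..
  have Lam0: "0 \<le> Lam" unfolding Lam_eq E_def D_def using e0 d0 nn0 by (simp add: sum_nonneg)
  have Sg2: "Sg \<le> 3 * L\<^sup>2 * nn * Lam + 3 * H"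
    using Sg_bound nn0 unfolding Lam_eq by (simp add: algebra_simps)
  define cc where "cc = (real m * C + \<alpha>\<^sup>2 * (real m)\<^sup>2) / nn"
  have cc0: "0 \<le> cc" unfolding cc_def using C0 nn0 by simp
  have Lam_pre: "Lam \<le> 2 * P / (nn * (1 - q)) + cc * Sg"
  proof -
    have "Lam \<le> (1 / nn) * (2 / (1 - q) * P + real m * C * Sg) + \<alpha>\<^sup>2 * (real m)\<^sup>2 / nn * Sg"
      unfolding Lam_eq using E_bound D_bound nn0 by (intro add_mono mult_left_mono) auto
    also have "\<dots> = 2 * P / (nn * (1 - q)) + cc * Sg"
      unfolding cc_def using nn0 q1 by (simp add: field_simps)
    finally show ?thesis .
  qed
  have kappa: "3 * L\<^sup>2 * nn * cc \<le> 1 / 4"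
  proof -
    have k1: "6 * L\<^sup>2 * (\<alpha>\<^sup>2 * real m / (1 - q)) \<le> 1 / 8"
    proof -
      have "\<alpha>\<^sup>2 * real m / (1 - q) \<le> 1 / (48 * L\<^sup>2)"
        using al1 q1 m0 L_pos by (simp add: field_simps)
      then have "6 * L\<^sup>2 * (\<alpha>\<^sup>2 * real m / (1 - q)) \<le> 6 * L\<^sup>2 * (1 / (48 * L\<^sup>2))"
        using L_pos by (intro mult_left_mono) auto
      then show ?thesis using L_pos by simp
    qed
    have k2: "3 * L\<^sup>2 * (\<alpha>\<^sup>2 * (real m)\<^sup>2) \<le> 1 / 8"
    proof -
      have "\<alpha>\<^sup>2 * (real m)\<^sup>2 \<le> 1 / (24 * L\<^sup>2)"
        using al2 m0 L_pos by (simp add: field_simps)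
      then have "3 * L\<^sup>2 * (\<alpha>\<^sup>2 * (real m)\<^sup>2) \<le> 3 * L\<^sup>2 * (1 / (24 * L\<^sup>2))"
        using L_pos by (intro mult_left_mono) auto
      then show ?thesis using L_pos by simp
    qed
    have "3 * L\<^sup>2 * nn * cc = 6 * L\<^sup>2 * (\<alpha>\<^sup>2 * real m / (1 - q)) + 3 * L\<^sup>2 * (\<alpha>\<^sup>2 * (real m)\<^sup>2)"
      unfolding cc_def C_def using nn0 q1 by (simp add: field_simps)
    then show ?thesis using k1 k2 by simp
  qed
  have Lam_b: "Lam \<le> 4 * P / (nn * (1 - q)) + 6 * cc * H"
  proof -
    have "Lam \<le> 2 * P / (nn * (1 - q)) + cc * (3 * L\<^sup>2 * nn * Lam + 3 * H)"
      using Lam_pre Sg2 cc0 by (meson add_left_mono mult_left_mono order_trans)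
    then have "Lam \<le> 2 * P / (nn * (1 - q)) + (3 * L\<^sup>2 * nn * cc) * Lam + 3 * cc * H"
      by (simp add: algebra_simps)
    moreover have "(3 * L\<^sup>2 * nn * cc) * Lam \<le> 1 / 4 * Lam" using kappa Lam0 by (rule mult_right_mono)
    moreover have "0 \<le> 2 * P / (nn * (1 - q))" using P0 nn0 q1 by simp
    moreover have "0 \<le> cc * H" using cc0 H0 by simp
    ultimately show ?thesis by simp
  qed
  define u where "u = 1 / (1 - q)"
  have u1: "1 \<le> u" unfolding u_def using q0 q1 by simp
  have Cu: "C = 2 * \<alpha>\<^sup>2 * u" unfolding C_def u_def by simp
  have du1: "y / (1 - q) = y * u" for y unfolding u_def by simp
  have du2: "y / (1 - q)\<^sup>2 = y * u\<^sup>2" for y unfolding u_def by (simp add: power_divide)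
  have gF0: "0 \<le> 6 * \<alpha>\<^sup>2 * real m * (4 + (real m)\<^sup>2) / (1 - q)\<^sup>2 * (norm (gF (xb 0)))\<^sup>2"
    using m0 by simp
  have AF0: "0 \<le> A * (F z - fbar)" using A0 Fz0 by simp
  have main1: "Lam \<le> 4 / (nn * (1 - q)) * P
              + 6 * (real m)\<^sup>2 * \<alpha>\<^sup>2 * B2 * (real m + 4) / (1 - q)\<^sup>2
              + 6 * \<alpha>\<^sup>2 * real m * (4 + (real m)\<^sup>2) / (1 - q)\<^sup>2 * (norm (gF (xb 0)))\<^sup>2
              + 12 * (real m)\<^sup>2 * \<alpha>\<^sup>2 * A * (4 + real m) / (1 - q) * (F z - fbar)"
  proof -
    have "6 * cc * H \<le> 6 * cc * (nn * real m * K)" using mult_left_mono[OF HK cc0] by simp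
    also have "\<dots> = (6 * \<alpha>\<^sup>2 * (real m)\<^sup>2 * (2 * u + real m)) * B2 + (6 * \<alpha>\<^sup>2 * (real m)\<^sup>2 * (2 * u + real m)) * (A * (F z - fbar))"
      unfolding cc_def Cu K_def using nn0 by (simp add: field_simps power2_eq_square)
    also have "\<dots> \<le> (6 * \<alpha>\<^sup>2 * (real m)\<^sup>2 * ((real m + 4) * u\<^sup>2)) * B2 + (6 * \<alpha>\<^sup>2 * (real m)\<^sup>2 * (2 * (4 + real m) * u)) * (A * (F z - fbar))"
    proof (intro add_mono mult_right_mono mult_left_mono B20 AF0)
      show "2 * u + real m \<le> (real m + 4) * u\<^sup>2"
      proof -
        have "u \<le> u\<^sup>2" using u1 by (simp add: power2_eq_square)
        moreover have "real m \<le> real m * u\<^sup>2" using u1 m0 by (simp add: power2_eq_square) (metis mult_right_mono mult.commute mult_1 one_le_power power2_eq_square u1 m0 less_imp_le)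
        moreover have "(real m + 4) * u\<^sup>2 = real m * u\<^sup>2 + 4 * u\<^sup>2" by (simp add: algebra_simps)
        ultimately show ?thesis using u1 by linarith
      qed
      show "2 * u + real m \<le> 2 * (4 + real m) * u"
      proof -
        have "real m \<le> real m * u" using mult_left_mono[OF u1, of "real m"] m0 by simp
        moreover have "2 * (4 + real m) * u = 8 * u + 2 * (real m * u)" by (simp add: algebra_simps)
        ultimately show ?thesis using u1 by linarith
      qed
    qed auto
    also have "\<dots> = 6 * (real m)\<^sup>2 * \<alpha>\<^sup>2 * B2 * (real m + 4) / (1 - q)\<^sup>2
              + 12 * (real m)\<^sup>2 * \<alpha>\<^sup>2 * A * (4 + real m) / (1 - q) * (F z - fbar)"
      unfolding du1 du2 by (simp add: algebra_simps power2_eq_square)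
    finally have "6 * cc * H \<le> \<dots>" .
    moreover have "4 * P / (nn * (1 - q)) = 4 / (nn * (1 - q)) * P" by simp
    ultimately show ?thesis using Lam_b gF0 by linarith
  qed
  have main2: "e m \<le> r ^ m * P
              + 12 * \<alpha>\<^sup>2 * nn * L\<^sup>2 / (1 - q) * Lam
              + 6 * \<alpha>\<^sup>2 * real m * nn * B2 / (1 - q)
              + 6 * \<alpha>\<^sup>2 * real m * nn / (1 - q) * (norm (gF (xb 0)))\<^sup>2
              + 12 * A * \<alpha>\<^sup>2 * real m * nn / (1 - q) * (F z - fbar)"
  proof -
    have "e m \<le> r ^ m * P + C * (\<Sum>k<m. S k)" by (rule e_unroll) simp
    also have "\<dots> \<le> r ^ m * P + C * (3 * L\<^sup>2 * nn * Lam + 3 * (nn * real m * K))"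
      using Sg2 HK C0 unfolding Sg_def[symmetric] by (intro add_left_mono mult_left_mono) auto
    also have "\<dots> = r ^ m * P + 6 * \<alpha>\<^sup>2 * nn * L\<^sup>2 / (1 - q) * Lam
              + 6 * \<alpha>\<^sup>2 * real m * nn * B2 / (1 - q) + 6 * \<alpha>\<^sup>2 * real m * nn / (1 - q) * (A * (F z - fbar))"
      unfolding Cu K_def du1 by (simp add: algebra_simps)
    also have "\<dots> \<le> r ^ m * P
              + 12 * \<alpha>\<^sup>2 * nn * L\<^sup>2 / (1 - q) * Lam
              + 6 * \<alpha>\<^sup>2 * real m * nn * B2 / (1 - q)
              + 6 * \<alpha>\<^sup>2 * real m * nn / (1 - q) * (norm (gF (xb 0)))\<^sup>2
              + 12 * A * \<alpha>\<^sup>2 * real m * nn / (1 - q) * (F z - fbar)"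
    proof -
      have c1: "0 \<le> \<alpha>\<^sup>2 * nn * L\<^sup>2 / (1 - q) * Lam" using nn0 q1 Lam0 by simp
      have c2: "0 \<le> \<alpha>\<^sup>2 * real m * nn / (1 - q) * (A * (F z - fbar))" using nn0 q1 AF0 by simp
      have c3: "0 \<le> \<alpha>\<^sup>2 * real m * nn / (1 - q) * (norm (gF (xb 0)))\<^sup>2" using nn0 q1 by simp
      have e1: "12 * \<alpha>\<^sup>2 * nn * L\<^sup>2 / (1 - q) * Lam = 12 * (\<alpha>\<^sup>2 * nn * L\<^sup>2 / (1 - q) * Lam)" by simp
      have e2: "6 * \<alpha>\<^sup>2 * nn * L\<^sup>2 / (1 - q) * Lam = 6 * (\<alpha>\<^sup>2 * nn * L\<^sup>2 / (1 - q) * Lam)" by simp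
      have e3: "12 * A * \<alpha>\<^sup>2 * real m * nn / (1 - q) * (F z - fbar) = 12 * (\<alpha>\<^sup>2 * real m * nn / (1 - q) * (A * (F z - fbar)))" by simp
      have e4: "6 * \<alpha>\<^sup>2 * real m * nn / (1 - q) * (A * (F z - fbar)) = 6 * (\<alpha>\<^sup>2 * real m * nn / (1 - q) * (A * (F z - fbar)))" by simp
      have e5: "6 * \<alpha>\<^sup>2 * real m * nn / (1 - q) * (norm (gF (xb 0)))\<^sup>2 = 6 * (\<alpha>\<^sup>2 * real m * nn / (1 - q) * (norm (gF (xb 0)))\<^sup>2)" by simp
      show ?thesis unfolding e1 e2 e3 e4 e5 by (rule lin_aux[OF c1 c2 c3])
    qed
    finally show ?thesis .
  qed
  have em: "cons_err (x (Suc t) 0) = e m" unfolding e_def epoch ..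
  show ?thesis
    unfolding Let_def epoch
    using main1 main2
    unfolding nn_def \<rho>_def q_def r_def F_def gF_def fbar_def A_def B2_def Lam_def z_def P_def e_def xb_def
    by (rule conjI)
qed

end
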